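(* Let $\mathfrak{B}=\bigcup_{\alpha<\xi}B_\alpha$ be a tightly $\sigma$-filtered Boolean algebra with its fixed chain $(B_\alpha)_{\alpha<\xi}$ and countable subalgebras $R_\alpha,S_\alpha$. Let $\Gamma_1,\Gamma_2\subseteq\xi$ be such that $\Gamma_1$, $\Gamma_2$ and $\Gamma_1\cap\Gamma_2$ are all saturated. Then the inclusions $E(\Gamma_1\cap\Gamma_2)\subseteq E(\Gamma_1)\subseteq E(\Gamma_1\cup\Gamma_2)$, $E(\Gamma_1\cap\Gamma_2)\subseteq E(\Gamma_2)\subseteq E(\Gamma_1\cup\Gamma_2)$ form a push-out diagram; that is, $\langle E(\Gamma_1)\cup E(\Gamma_2)\rangle=E(\Gamma_1\cup\Gamma_2)$, $E(\Gamma_1)\cap E(\Gamma_2)=E(\Gamma_1\cap\Gamma_2)$, and $E(\Gamma_1)$ and $E(\Gamma_2)$ commute.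
   Context: For a subset $X$ of a Boolean algebra, $\langle X\rangle$ is the subalgebra generated by $X$. Two subalgebras $A,S$ commute if whenever $a\in A$, $s\in S$, $a\wedge s=0$, there exist $b_1,b_2\in A\cap S$ with $a\le b_1$, $s\le b_2$, $b_1\wedge b_2=0$. A square of inclusions $R\subseteq A\subseteq B$, $R\subseteq S\subseteq B$ is a push-out diagram if $\langle A\cup S\rangle=B$, $A\cap S=R$, and $A,S$ commute. $\mathfrak{B}$ is tightly $\sigma$-filtered via an increasing chain of subalgebras $(B_\alpha)_{\alpha<\xi}$ ($\xi$ an ordinal) with $B_0=\{0,1\}$, $\mathfrak{B}=\bigcup_{\alpha<\xi}B_\alpha$, $B_\alpha=\bigcup_{\beta<\alpha}B_\beta$ for limit $\alpha$, and for each $\alpha<\xi$ countable subalgebras $R_\alpha,S_\alpha\subseteq\mathfrak{B}$ such that $R_\alpha\subseteq B_\alpha\subseteq B_{\alpha+1}$, $R_\alpha\subseteq S_\alpha\subseteq B_{\alpha+1}$ is a push-out diagram. For $\Gamma\subseteq\xi$, $E(\Gamma)=\langle\bigcup_{i\in\Gamma}S_i\rangle$. A set $\Gamma\subseteq\xi$ is saturated if $R_\gamma\subseteq E(\Gamma\cap\gamma)$ for every $\gamma\in\Gamma$. *)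

theory Defs
  imports Main "HOL-Library.Countable_Set"
begin

text \<open>The Boolean algebra is the whole type 'a (class boolean_algebra);
  subalgebras are subsets containing bot and closed under sup, inf, complement.\<close>

definition subalgebra :: "'a::boolean_algebra set \<Rightarrow> bool" where
  "subalgebra A \<longleftrightarrow> bot \<in> A \<and> top \<in> A \<and>
     (\<forall>x\<in>A. \<forall>y\<in>A. sup x y \<in> A \<and> inf x y \<in> A) \<and> (\<forall>x\<in>A. - x \<in> A)"

definition gen :: "'a::boolean_algebra set \<Rightarrow> 'a set" where
  "gen X = \<Inter> {A. subalgebra A \<and> X \<subseteq> A}"

definition commute :: "'a::boolean_algebra set \<Rightarrow> 'a set \<Rightarrow> bool" where
  "commute A S \<longleftrightarrow> (\<forall>a\<in>A. \<forall>s\<in>S. inf a s = bot \<longrightarrow>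
     (\<exists>b1\<in>A \<inter> S. \<exists>b2\<in>A \<inter> S. a \<le> b1 \<and> s \<le> b2 \<and> inf b1 b2 = bot))"

definition push_out :: "'a::boolean_algebra set \<Rightarrow> 'a set \<Rightarrow> 'a set \<Rightarrow> 'a set \<Rightarrow> bool" where
  "push_out R A S B \<longleftrightarrow> R \<subseteq> A \<and> A \<subseteq> B \<and> R \<subseteq> S \<and> S \<subseteq> B \<and>
     gen (A \<union> S) = B \<and> A \<inter> S = R \<and> commute A S"

text \<open>Ordinals below/at \<xi> are modelled by elements of a well-ordered type 'i;
  the successor of \<alpha> is the least element above \<alpha>.\<close>
definition succ_ix :: "'i::wellorder \<Rightarrow> 'i" where
  "succ_ix \<alpha> = (LEAST \<beta>. \<alpha> < \<beta>)"

definition is_limit_ix :: "'i::wellorder \<Rightarrow> bool" where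
  "is_limit_ix \<alpha> \<longleftrightarrow> (\<exists>\<beta>. \<beta> < \<alpha>) \<and> (\<forall>\<beta><\<alpha>. \<exists>\<gamma>. \<beta> < \<gamma> \<and> \<gamma> < \<alpha>)"

definition is_zero_ix :: "'i::wellorder \<Rightarrow> bool" where
  "is_zero_ix \<alpha> \<longleftrightarrow> (\<forall>\<beta>. \<not> \<beta> < \<alpha>)"

text \<open>B is considered on indices \<le> \<xi> (B at \<xi> itself only occurs as B (\<alpha>+1) when \<xi> = \<alpha>+1).\<close>
definition tightly_sigma_filtered ::
  "'i::wellorder \<Rightarrow> ('i \<Rightarrow> 'a::boolean_algebra set) \<Rightarrow> ('i \<Rightarrow> 'a set) \<Rightarrow> ('i \<Rightarrow> 'a set) \<Rightarrow> bool" where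
  "tightly_sigma_filtered \<xi> B R S \<longleftrightarrow>
     (\<forall>\<alpha>\<le>\<xi>. subalgebra (B \<alpha>)) \<and>
     (\<forall>\<alpha>\<le>\<xi>. \<forall>\<beta>\<le>\<alpha>. B \<beta> \<subseteq> B \<alpha>) \<and>
     (\<forall>\<alpha>\<le>\<xi>. is_zero_ix \<alpha> \<longrightarrow> B \<alpha> = {bot, top}) \<and>
     (UNIV = (\<Union>\<alpha>\<in>{..<\<xi>}. B \<alpha>)) \<and>
     (\<forall>\<alpha>\<le>\<xi>. is_limit_ix \<alpha> \<longrightarrow> B \<alpha> = (\<Union>\<beta>\<in>{..<\<alpha>}. B \<beta>)) \<and>
     (\<forall>\<alpha><\<xi>. subalgebra (R \<alpha>) \<and> subalgebra (S \<alpha>) \<and> countable (R \<alpha>) \<and> countable (S \<alpha>) \<and>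
        push_out (R \<alpha>) (B \<alpha>) (S \<alpha>) (B (succ_ix \<alpha>)))"

definition E :: "('i \<Rightarrow> 'a::boolean_algebra set) \<Rightarrow> 'i set \<Rightarrow> 'a set" where
  "E S \<Gamma> = gen (\<Union>i\<in>\<Gamma>. S i)"

definition saturated :: "('i::wellorder \<Rightarrow> 'a::boolean_algebra set) \<Rightarrow> ('i \<Rightarrow> 'a set) \<Rightarrow> 'i set \<Rightarrow> bool" where
  "saturated R S \<Gamma> \<longleftrightarrow> (\<forall>\<gamma>\<in>\<Gamma>. R \<gamma> \<subseteq> E S (\<Gamma> \<inter> {..<\<gamma>}))"

end

theory Submission
  imports Defs
begin


lemma subalgebra_UNIV: "subalgebra (UNIV::'a::boolean_algebra set)"
  by (simp add: subalgebra_def)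

lemma gen_subalg: "subalgebra (gen X)"
  unfolding subalgebra_def gen_def by auto

lemma gen_incl: "X \<subseteq> gen X"
  unfolding gen_def by auto

lemma gen_least: "subalgebra A \<Longrightarrow> X \<subseteq> A \<Longrightarrow> gen X \<subseteq> A"
  unfolding gen_def by auto

lemma gen_mono: "X \<subseteq> Y \<Longrightarrow> gen X \<subseteq> gen Y"
  by (meson gen_incl gen_least gen_subalg order_trans)

lemma gen_gen_Un: "gen (gen X \<union> Y) = gen (X \<union> Y)"
proof
  show "gen (gen X \<union> Y) \<subseteq> gen (X \<union> Y)"
    by (rule gen_least[OF gen_subalg]) (meson Un_least gen_least gen_subalg gen_incl le_sup_iff order_trans)
  show "gen (X \<union> Y) \<subseteq> gen (gen X \<union> Y)"
    by (rule gen_mono) (use gen_incl in blast)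
qed

lemma gen_Un_gen: "gen (gen X \<union> gen Y) = gen (X \<union> Y)"
  by (metis gen_gen_Un sup_commute)

lemma sub_bot: "subalgebra A \<Longrightarrow> bot \<in> A" by (simp add: subalgebra_def)
lemma sub_top: "subalgebra A \<Longrightarrow> top \<in> A" by (simp add: subalgebra_def)
lemma sub_sup: "subalgebra A \<Longrightarrow> x \<in> A \<Longrightarrow> y \<in> A \<Longrightarrow> sup x y \<in> A" by (simp add: subalgebra_def)
lemma sub_inf: "subalgebra A \<Longrightarrow> x \<in> A \<Longrightarrow> y \<in> A \<Longrightarrow> inf x y \<in> A" by (simp add: subalgebra_def)
lemma sub_neg: "subalgebra A \<Longrightarrow> x \<in> A \<Longrightarrow> - x \<in> A" by (simp add: subalgebra_def)

inductive_set dnf :: "'a::boolean_algebra set \<Rightarrow> 'a set \<Rightarrow> 'a set" for A S where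
  dnf_bot: "bot \<in> dnf A S"
| dnf_step: "a \<in> A \<Longrightarrow> s \<in> S \<Longrightarrow> x \<in> dnf A S \<Longrightarrow> sup (inf a s) x \<in> dnf A S"

lemma dnf_sup: "x \<in> dnf A S \<Longrightarrow> y \<in> dnf A S \<Longrightarrow> sup x y \<in> dnf A S"
  by (induction x rule: dnf.induct) (auto simp: sup_assoc intro: dnf.intros)

lemma dnf_inf_atom: "y \<in> dnf A S \<Longrightarrow> subalgebra A \<Longrightarrow> subalgebra S \<Longrightarrow> a \<in> A \<Longrightarrow> s \<in> S
   \<Longrightarrow> inf (inf a s) y \<in> dnf A S"
proof (induction y rule: dnf.induct)
  case dnf_bot then show ?case by (simp add: dnf.intros)
next
  case (dnf_step c t y)
  have "inf (inf a s) (sup (inf c t) y) = sup (inf (inf a c) (inf s t)) (inf (inf a s) y)"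
    by (simp add: inf_sup_distrib1 inf_assoc inf_left_commute)
  moreover have "sup (inf (inf a c) (inf s t)) (inf (inf a s) y) \<in> dnf A S"
    using dnf_step by (auto intro!: dnf.intros sub_inf)
  ultimately show ?case by simp
qed

lemma dnf_inf: "x \<in> dnf A S \<Longrightarrow> y \<in> dnf A S \<Longrightarrow> subalgebra A \<Longrightarrow> subalgebra S \<Longrightarrow> inf x y \<in> dnf A S"
proof (induction x rule: dnf.induct)
  case dnf_bot then show ?case by (simp add: dnf.intros)
next
  case (dnf_step a s x)
  have "inf (sup (inf a s) x) y = sup (inf (inf a s) y) (inf x y)"
    by (simp add: inf_sup_distrib2)
  then show ?case using dnf_step by (simp add: dnf_sup dnf_inf_atom)
qed

lemma dnf_A: "subalgebra S \<Longrightarrow> a \<in> A \<Longrightarrow> a \<in> dnf A S"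
  using dnf_step[of a A top S bot] by (simp add: sub_top dnf_bot)

lemma dnf_S: "subalgebra A \<Longrightarrow> s \<in> S \<Longrightarrow> s \<in> dnf A S"
  using dnf_step[of top A s S bot] by (simp add: sub_top dnf_bot)

lemma dnf_neg: "x \<in> dnf A S \<Longrightarrow> subalgebra A \<Longrightarrow> subalgebra S \<Longrightarrow> - x \<in> dnf A S"
proof (induction x rule: dnf.induct)
  case dnf_bot
  then show ?case using dnf_A[of S top A] by (simp add: sub_top)
next
  case (dnf_step a s x)
  have "- sup (inf a s) x = inf (sup (- a) (- s)) (- x)" by simp
  moreover have "sup (- a) (- s) \<in> dnf A S"
    using dnf_step by (simp add: dnf_sup dnf_A dnf_S sub_neg)
  ultimately show ?case using dnf_step by (simp add: dnf_inf)
qed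

lemma dnf_subalg: "subalgebra A \<Longrightarrow> subalgebra S \<Longrightarrow> subalgebra (dnf A S)"
  unfolding subalgebra_def[of "dnf A S"]
  using dnf_bot dnf_A[of S top A] dnf_sup dnf_inf dnf_neg by (auto simp: sub_top)

lemma gen_dnf: "subalgebra A \<Longrightarrow> subalgebra S \<Longrightarrow> gen (A \<union> S) \<subseteq> dnf A S"
  by (rule gen_least) (auto simp: dnf_subalg dnf_A dnf_S)



definition Qp :: "'a::boolean_algebra set \<Rightarrow> 'a set \<Rightarrow> 'a set \<Rightarrow> bool" where
  "Qp X Y D \<longleftrightarrow> (\<forall>x\<in>X. \<forall>y\<in>Y. inf x y = bot \<longrightarrow> (\<exists>d\<in>D. x \<le> d \<and> inf d y = bot))"

lemma Qp_sym: "subalgebra D \<Longrightarrow> Qp X Y D \<Longrightarrow> Qp Y X D"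
  unfolding Qp_def
proof (intro ballI impI)
  fix y x assume D: "subalgebra D" and Q: "\<forall>x\<in>X. \<forall>y\<in>Y. inf x y = bot \<longrightarrow> (\<exists>d\<in>D. x \<le> d \<and> inf d y = bot)"
    and y: "y \<in> Y" and x: "x \<in> X" and xy: "inf y x = bot"
  then obtain d where d: "d \<in> D" "x \<le> d" "inf d y = bot" by (metis inf_commute)
  show "\<exists>d\<in>D. y \<le> d \<and> inf d x = bot"
  proof (intro bexI conjI)
    show "- d \<in> D" using D d by (simp add: sub_neg)
    show "y \<le> - d" using d(3) by (metis inf_shunt inf_commute)
    show "inf (- d) x = bot" using d(2) by (metis inf_shunt inf_commute double_compl)
  qed
qed

lemma Qp_anti: "Qp X Y D \<Longrightarrow> X' \<subseteq> X \<Longrightarrow> Y' \<subseteq> Y \<Longrightarrow> D \<subseteq> D' \<Longrightarrow> Qp X' Y' D'"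
  unfolding Qp_def by blast

lemma Qp_dnf:
  assumes D: "subalgebra D"
    and atom: "\<And>a s c t. a \<in> A1 \<Longrightarrow> s \<in> S1 \<Longrightarrow> c \<in> A2 \<Longrightarrow> t \<in> S2 \<Longrightarrow>
        inf (inf a s) (inf c t) = bot \<Longrightarrow> \<exists>d\<in>D. inf a s \<le> d \<and> inf d (inf c t) = bot"
  shows "Qp (dnf A1 S1) (dnf A2 S2) D"
proof -
  have inner: "y \<in> dnf A2 S2 \<Longrightarrow> a \<in> A1 \<Longrightarrow> s \<in> S1 \<Longrightarrow> inf (inf a s) y = bot \<Longrightarrow>
      \<exists>d\<in>D. inf a s \<le> d \<and> inf d y = bot" for y a s
  proof (induction y rule: dnf.induct)
    case dnf_bot then show ?case using D by (intro bexI[of _ top]) (auto simp: sub_top)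
  next
    case (dnf_step c t y)
    have "inf (inf a s) (inf c t) = bot" "inf (inf a s) y = bot"
      using dnf_step.prems(3) by (simp_all add: inf_sup_distrib1)
    then obtain d1 d2 where "d1 \<in> D" "inf a s \<le> d1" "inf d1 (inf c t) = bot"
      "d2 \<in> D" "inf a s \<le> d2" "inf d2 y = bot"
      using atom dnf_step by meson
    note dd = this
    show ?case
    proof (intro bexI[of _ "inf d1 d2"] conjI)
      show "inf d1 d2 \<in> D" using dd D by (simp add: sub_inf)
      show "inf a s \<le> inf d1 d2" using dd by simp
      have "inf (inf d1 d2) (inf c t) = bot" using dd(3)
        by (metis inf_assoc inf_bot_left inf_commute)
      moreover have "inf (inf d1 d2) y = bot" using dd(6)
        by (metis inf_assoc inf_bot_right inf_commute)
      ultimately show "inf (inf d1 d2) (sup (inf c t) y) = bot" by (simp add: inf_sup_distrib1)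
    qed
  qed
  have "x \<in> dnf A1 S1 \<Longrightarrow> y \<in> dnf A2 S2 \<Longrightarrow> inf x y = bot \<Longrightarrow> \<exists>d\<in>D. x \<le> d \<and> inf d y = bot" for x y
  proof (induction x rule: dnf.induct)
    case dnf_bot then show ?case using D by (intro bexI[of _ bot]) (auto simp: sub_bot)
  next
    case (dnf_step a s x)
    have "inf (inf a s) y = bot" "inf x y = bot"
      using dnf_step.prems(2) by (simp_all add: inf_sup_distrib2)
    then obtain d1 d2 where "d1 \<in> D" "inf a s \<le> d1" "inf d1 y = bot"
      "d2 \<in> D" "x \<le> d2" "inf d2 y = bot"
      using inner dnf_step by meson
    then show ?case
      by (intro bexI[of _ "sup d1 d2"]) (auto simp: D sub_sup inf_sup_distrib2 intro: sup.coboundedI1 sup.coboundedI2)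
  qed
  then show ?thesis unfolding Qp_def by blast
qed

lemma commuteD: "commute Bb S \<Longrightarrow> b \<in> Bb \<Longrightarrow> s \<in> S \<Longrightarrow> inf b s = bot \<Longrightarrow>
   \<exists>b1 b2. b1 \<in> Bb \<inter> S \<and> b2 \<in> Bb \<inter> S \<and> b \<le> b1 \<and> s \<le> b2 \<and> inf b1 b2 = bot"
  unfolding commute_def by blast

lemma step_one:
  assumes sA: "subalgebra A" and sC: "subalgebra C" and sD: "subalgebra D" and sB: "subalgebra Bb"
    and sS: "subalgebra S" and AB: "A \<subseteq> Bb" and CB: "C \<subseteq> Bb" and RA: "Bb \<inter> S \<subseteq> A"
    and com: "commute Bb S" and Q: "Qp A C D"
  shows "Qp (gen (A \<union> S)) C D"
proof -
  have "Qp (dnf A S) (dnf C {top}) D"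
  proof (rule Qp_dnf[OF sD])
    fix a s c t assume a: "a \<in> A" and s: "s \<in> S" and c: "c \<in> C" and t: "t \<in> {top}"
      and dis: "inf (inf a s) (inf c t) = bot"
    have ac: "inf a c \<in> Bb" using a c AB CB sB by (meson sub_inf subsetD)
    have "inf (inf a c) s = bot" using dis t by (simp add: inf_assoc inf_left_commute inf_commute)
    then obtain b1 b2 where b: "b1 \<in> Bb \<inter> S" "b2 \<in> Bb \<inter> S" "inf a c \<le> b1" "s \<le> b2" "inf b1 b2 = bot"
      using commuteD[OF com ac s] by blast
    have ar: "inf a b2 \<in> A" using a b(2) RA sA by (auto simp: sub_inf)
    have "inf (inf a b2) c = inf (inf a c) b2" by (simp add: ac_simps)
    also have "\<dots> \<le> inf b1 b2" using b(3) by (rule inf_mono) simp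
    finally have "inf (inf a b2) c \<le> inf b1 b2" .
    then have "inf (inf a b2) c = bot" using b(5) by (simp add: le_bot)
    then obtain d where d: "d \<in> D" "inf a b2 \<le> d" "inf d c = bot" using Q ar c unfolding Qp_def by blast
    show "\<exists>d\<in>D. inf a s \<le> d \<and> inf d (inf c t) = bot"
    proof (intro bexI conjI)
      have "inf a s \<le> inf a b2" using b(4) by (rule inf_mono[OF order_refl])
      then show "inf a s \<le> d" using d(2) by (rule order_trans)
      show "inf d (inf c t) = bot" using d(3) t by simp
    qed (fact d)
  qed
  moreover have "C \<subseteq> dnf C {top}" proof
    fix c assume "c \<in> C"
    then have "sup (inf c top) bot \<in> dnf C {top}" by (intro dnf.intros) auto
    then show "c \<in> dnf C {top}" by simp
  qed
  ultimately show ?thesis using gen_dnf[OF sA sS] by (meson Qp_anti order_refl)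
qed

lemma step_both:
  assumes sA: "subalgebra A" and sC: "subalgebra C" and sD: "subalgebra D" and sB: "subalgebra Bb"
    and sS: "subalgebra S" and AB: "A \<subseteq> Bb" and CB: "C \<subseteq> Bb" and RD: "Bb \<inter> S \<subseteq> D" and DA: "D \<subseteq> A"
    and com: "commute Bb S" and Q: "Qp A C D"
  shows "Qp (gen (A \<union> S)) (gen (C \<union> S)) (gen (D \<union> S))"
proof -
  have "Qp (dnf A S) (dnf C S) (gen (D \<union> S))"
  proof (rule Qp_dnf[OF gen_subalg])
    fix a s c t assume a: "a \<in> A" and s: "s \<in> S" and c: "c \<in> C" and t: "t \<in> S"
      and dis: "inf (inf a s) (inf c t) = bot"
    have ac: "inf a c \<in> Bb" using a c AB CB sB by (meson sub_inf subsetD)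
    have st: "inf s t \<in> S" using s t sS by (simp add: sub_inf)
    have "inf (inf a c) (inf s t) = bot" using dis by (simp add: inf_assoc inf_left_commute inf_commute)
    then obtain b1 b2 where b: "b1 \<in> Bb \<inter> S" "b2 \<in> Bb \<inter> S" "inf a c \<le> b1" "inf s t \<le> b2" "inf b1 b2 = bot"
      using commuteD[OF com ac st] by blast
    have r: "b1 \<in> D" using b RD by blast
    have ar: "inf a (- b1) \<in> A" using a r DA sA by (auto simp: sub_inf sub_neg)
    have "inf (inf a (- b1)) c = inf (inf a c) (- b1)" by (simp add: ac_simps)
    also have "\<dots> \<le> inf b1 (- b1)" using b(3) by (rule inf_mono) simp
    finally have "inf (inf a (- b1)) c = bot" by (simp add: le_bot)
    then obtain d0 where d0: "d0 \<in> D" "inf a (- b1) \<le> d0" "inf d0 c = bot" using Q ar c unfolding Qp_def by blast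
    let ?d = "sup d0 (inf b1 s)"
    show "\<exists>d\<in>gen (D \<union> S). inf a s \<le> d \<and> inf d (inf c t) = bot"
    proof (intro bexI conjI)
      show "?d \<in> gen (D \<union> S)"
        using gen_incl[of "D \<union> S"] d0(1) r s by (auto intro!: sub_sup sub_inf gen_subalg)
      have "inf a s = inf (inf a s) (sup (- b1) b1)" by simp
      also have "\<dots> = sup (inf (inf a s) (- b1)) (inf (inf a s) b1)" by (rule inf_sup_distrib1)
      also have "inf (inf a s) (- b1) = inf (inf a (- b1)) s" by (simp add: ac_simps)
      also have "inf (inf a s) b1 = inf (inf a b1) s" by (simp add: ac_simps)
      also have "sup (inf (inf a (- b1)) s) (inf (inf a b1) s) \<le> ?d"
        using d0(2) by (intro sup_mono) (auto intro: le_infI1 le_infI2)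
      finally show "inf a s \<le> ?d" .
      have "inf (inf b1 s) (inf c t) \<le> inf b1 (inf s t)" by (simp add: le_infI1 le_infI2 inf.coboundedI1 inf.coboundedI2)
      also have "\<dots> \<le> inf b1 b2" using b(4) by (rule inf_mono[OF order_refl])
      finally have "inf (inf b1 s) (inf c t) \<le> inf b1 b2" .
      then have "inf (inf b1 s) (inf c t) = bot" using b(5) by (simp add: le_bot)
      moreover have "inf d0 (inf c t) = bot" using d0(3) by (metis inf_assoc inf_bot_left)
      ultimately show "inf ?d (inf c t) = bot" by (simp add: inf_sup_distrib2)
    qed
  qed
  then show ?thesis using gen_dnf[OF sA sS] gen_dnf[OF sC sS] by (meson Qp_anti order_refl)
qed



lemma succ_gt: "(\<beta>::'i::wellorder) < \<xi> \<Longrightarrow> \<beta> < succ_ix \<beta>"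
  unfolding succ_ix_def by (rule LeastI)

lemma succ_le: "(\<beta>::'i::wellorder) < \<gamma> \<Longrightarrow> succ_ix \<beta> \<le> \<gamma>"
  unfolding succ_ix_def by (rule Least_le)

lemma less_succ_iff: assumes "(\<beta>::'i::wellorder) < \<xi>" shows "i < succ_ix \<beta> \<longleftrightarrow> i \<le> \<beta>"
proof
  assume "i < succ_ix \<beta>"
  then show "i \<le> \<beta>" using succ_le[of \<beta> i] by (metis not_le)
next
  assume "i \<le> \<beta>"
  then show "i < succ_ix \<beta>" using succ_gt[OF assms] by (rule le_less_trans)
qed

lemma ix_cases: "is_zero_ix (\<alpha>::'i::wellorder) \<or> (\<exists>\<beta><\<alpha>. \<alpha> = succ_ix \<beta>) \<or> is_limit_ix \<alpha>"
proof (cases "is_zero_ix \<alpha> \<or> is_limit_ix \<alpha>")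
  case False
  then obtain \<beta> where b: "\<beta> < \<alpha>" "\<forall>\<gamma>. \<not> (\<beta> < \<gamma> \<and> \<gamma> < \<alpha>)"
    unfolding is_zero_ix_def is_limit_ix_def by blast
  have "succ_ix \<beta> \<le> \<alpha>" using b(1) by (rule succ_le)
  moreover have "\<beta> < succ_ix \<beta>" using b(1) by (rule succ_gt)
  ultimately have "\<alpha> = succ_ix \<beta>" using b(2) by (auto simp: le_less)
  then show ?thesis using b(1) by blast
qed auto

lemma E_mono: "\<Gamma> \<subseteq> \<Gamma>' \<Longrightarrow> E S \<Gamma> \<subseteq> E S \<Gamma>'"
  unfolding E_def by (rule gen_mono) blast

lemma E_subalg: "subalgebra (E S \<Gamma>)"
  unfolding E_def by (rule gen_subalg)

lemma E_incl: "i \<in> \<Gamma> \<Longrightarrow> S i \<subseteq> E S \<Gamma>"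
  unfolding E_def using gen_incl by blast

lemma tsf_sub: "tightly_sigma_filtered \<xi> B R S \<Longrightarrow> \<alpha> \<le> \<xi> \<Longrightarrow> subalgebra (B \<alpha>)"
  unfolding tightly_sigma_filtered_def by (elim conjE) (erule allE, erule impE, assumption)

lemma tsf_mono: "tightly_sigma_filtered \<xi> B R S \<Longrightarrow> \<alpha> \<le> \<xi> \<Longrightarrow> \<beta> \<le> \<alpha> \<Longrightarrow> B \<beta> \<subseteq> B \<alpha>"
  unfolding tightly_sigma_filtered_def by (elim conjE) (metis)

lemma tsf_po: "tightly_sigma_filtered \<xi> B R S \<Longrightarrow> \<alpha> < \<xi> \<Longrightarrow>
   subalgebra (R \<alpha>) \<and> subalgebra (S \<alpha>) \<and> push_out (R \<alpha>) (B \<alpha>) (S \<alpha>) (B (succ_ix \<alpha>))"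
  unfolding tightly_sigma_filtered_def by (elim conjE) (metis)

lemma E_sub_B:
  assumes T: "tightly_sigma_filtered \<xi> B R S" and a: "\<alpha> \<le> \<xi>"
  shows "E S (\<Gamma> \<inter> {..<\<alpha>}) \<subseteq> B \<alpha>"
  unfolding E_def
proof (rule gen_least)
  show "subalgebra (B \<alpha>)" using T a by (rule tsf_sub)
  show "(\<Union>i\<in>\<Gamma> \<inter> {..<\<alpha>}. S i) \<subseteq> B \<alpha>"
  proof (rule UN_least)
    fix i assume "i \<in> \<Gamma> \<inter> {..<\<alpha>}"
    then have i: "i < \<alpha>" by simp
    then have i\<xi>: "i < \<xi>" using a by simp
    have "S i \<subseteq> B (succ_ix i)"
      using tsf_po[OF T i\<xi>] unfolding push_out_def by blast
    moreover have "succ_ix i \<le> \<alpha>" using i by (rule succ_le)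
    ultimately show "S i \<subseteq> B \<alpha>" using tsf_mono[OF T a] by blast
  qed
qed

lemma E_succ:
  assumes "\<beta> < (\<xi>::'i::wellorder)"
  shows "E S (\<Gamma> \<inter> {..<succ_ix \<beta>}) =
     (if \<beta> \<in> \<Gamma> then gen (E S (\<Gamma> \<inter> {..<\<beta>}) \<union> S \<beta>) else E S (\<Gamma> \<inter> {..<\<beta>}))"
proof -
  have eq: "\<Gamma> \<inter> {..<succ_ix \<beta>} = \<Gamma> \<inter> {..<\<beta>} \<union> (if \<beta> \<in> \<Gamma> then {\<beta>} else {})"
  proof (intro equalityI subsetI)
    fix i assume "i \<in> \<Gamma> \<inter> {..<succ_ix \<beta>}"
    then have "i \<in> \<Gamma>" "i \<le> \<beta>" using less_succ_iff[OF assms, of i] by auto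
    then show "i \<in> \<Gamma> \<inter> {..<\<beta>} \<union> (if \<beta> \<in> \<Gamma> then {\<beta>} else {})"
      by (cases "i = \<beta>") auto
  next
    fix i assume "i \<in> \<Gamma> \<inter> {..<\<beta>} \<union> (if \<beta> \<in> \<Gamma> then {\<beta>} else {})"
    then have "i \<in> \<Gamma>" "i \<le> \<beta>" by (auto split: if_splits)
    then show "i \<in> \<Gamma> \<inter> {..<succ_ix \<beta>}" using less_succ_iff[OF assms, of i] by auto
  qed
  show ?thesis
  proof (cases "\<beta> \<in> \<Gamma>")
    case True
    then show ?thesis unfolding E_def eq by (simp add: gen_gen_Un UN_Un, simp add: Un_commute)
  next
    case False
    then show ?thesis unfolding E_def eq by simp
  qed
qed

lemma E_limit:
  assumes L: "is_limit_ix (\<alpha>::'i::wellorder)" and x: "x \<in> E S (\<Gamma> \<inter> {..<\<alpha>})"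
  shows "\<exists>\<beta><\<alpha>. x \<in> E S (\<Gamma> \<inter> {..<\<beta>})"
proof -
  define U where "U = (\<Union>\<beta>\<in>{..<\<alpha>}. E S (\<Gamma> \<inter> {..<\<beta>}))"
  obtain \<beta>0 where b0: "\<beta>0 < \<alpha>" using L unfolding is_limit_ix_def by blast
  have mono: "\<beta> \<le> \<beta>' \<Longrightarrow> E S (\<Gamma> \<inter> {..<\<beta>}) \<subseteq> E S (\<Gamma> \<inter> {..<\<beta>'})" for \<beta> \<beta>'
    by (rule E_mono) auto
  have two: "\<exists>\<beta><\<alpha>. u \<in> E S (\<Gamma> \<inter> {..<\<beta>}) \<and> v \<in> E S (\<Gamma> \<inter> {..<\<beta>})"
    if uU: "u \<in> U" and vU: "v \<in> U" for u v
  proof -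
    obtain b1 where b1: "b1 < \<alpha>" "u \<in> E S (\<Gamma> \<inter> {..<b1})" using uU unfolding U_def by blast
    obtain b2 where b2: "b2 < \<alpha>" "v \<in> E S (\<Gamma> \<inter> {..<b2})" using vU unfolding U_def by blast
    have "u \<in> E S (\<Gamma> \<inter> {..<max b1 b2})" using mono[of b1 "max b1 b2"] b1 by auto
    moreover have "v \<in> E S (\<Gamma> \<inter> {..<max b1 b2})" using mono[of b2 "max b1 b2"] b2 by auto
    moreover have "max b1 b2 < \<alpha>" using b1 b2 by simp
    ultimately show ?thesis by blast
  qed
  have memU: "\<beta> < \<alpha> \<Longrightarrow> y \<in> E S (\<Gamma> \<inter> {..<\<beta>}) \<Longrightarrow> y \<in> U" for \<beta> y
    unfolding U_def by blast
  have "subalgebra U"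
    unfolding subalgebra_def[of U]
  proof (intro conjI ballI)
    show "bot \<in> U" using memU[OF b0 sub_bot[OF E_subalg]] .
    show "top \<in> U" using memU[OF b0 sub_top[OF E_subalg]] .
    fix u assume u: "u \<in> U"
    then obtain b where "b < \<alpha>" "u \<in> E S (\<Gamma> \<inter> {..<b})" unfolding U_def by blast
    then show "- u \<in> U" using memU sub_neg[OF E_subalg] by blast
    fix v assume v: "v \<in> U"
    from two[OF u v] obtain \<beta> where "\<beta> < \<alpha>" "u \<in> E S (\<Gamma> \<inter> {..<\<beta>})" "v \<in> E S (\<Gamma> \<inter> {..<\<beta>})" by blast
    then show "sup u v \<in> U" "inf u v \<in> U"
      using memU[OF \<open>\<beta> < \<alpha>\<close> sub_sup[OF E_subalg]] memU[OF \<open>\<beta> < \<alpha>\<close> sub_inf[OF E_subalg]] by auto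
  qed
  moreover have "(\<Union>i\<in>\<Gamma> \<inter> {..<\<alpha>}. S i) \<subseteq> U"
  proof (rule UN_least)
    fix i assume "i \<in> \<Gamma> \<inter> {..<\<alpha>}"
    then obtain \<gamma> where g: "i \<in> \<Gamma>" "i < \<gamma>" "\<gamma> < \<alpha>" using L unfolding is_limit_ix_def by auto
    have "S i \<subseteq> E S (\<Gamma> \<inter> {..<\<gamma>})" using g by (intro E_incl) simp
    then show "S i \<subseteq> U" using memU[OF g(3)] by blast
  qed
  ultimately have "E S (\<Gamma> \<inter> {..<\<alpha>}) \<subseteq> U" unfolding E_def by (rule gen_least)
  then show ?thesis using x unfolding U_def by auto
qed



lemma Qp_refl: "Qp X X X"
  unfolding Qp_def by blast

theorem lemma3p2:
  fixes \<xi> :: "'i::wellorder"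
    and B R S :: "'i \<Rightarrow> 'a::boolean_algebra set"
    and \<Gamma>1 \<Gamma>2 :: "'i set"
  assumes "tightly_sigma_filtered \<xi> B R S"
    and "\<Gamma>1 \<subseteq> {..<\<xi>}" and "\<Gamma>2 \<subseteq> {..<\<xi>}"
    and "saturated R S \<Gamma>1" and "saturated R S \<Gamma>2" and "saturated R S (\<Gamma>1 \<inter> \<Gamma>2)"
  shows "push_out (E S (\<Gamma>1 \<inter> \<Gamma>2)) (E S \<Gamma>1) (E S \<Gamma>2) (E S (\<Gamma>1 \<union> \<Gamma>2))"
proof -
  note T = assms(1)
  have main: "\<alpha> \<le> \<xi> \<Longrightarrow> Qp (E S (\<Gamma>1 \<inter> {..<\<alpha>})) (E S (\<Gamma>2 \<inter> {..<\<alpha>})) (E S ((\<Gamma>1 \<inter> \<Gamma>2) \<inter> {..<\<alpha>}))" for \<alpha>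
  proof (induction \<alpha> rule: less_induct)
    case (less \<alpha>)
    consider "is_zero_ix \<alpha>" | "\<exists>\<beta><\<alpha>. \<alpha> = succ_ix \<beta>" | "is_limit_ix \<alpha>" using ix_cases by blast
    then show ?case
    proof cases
      case 1
      then have "\<And>\<Gamma>. \<Gamma> \<inter> {..<\<alpha>} = {}" unfolding is_zero_ix_def by auto
      then show ?thesis by (simp add: Qp_refl)
    next
      case 2
      then obtain \<beta> where b: "\<beta> < \<alpha>" and a: "\<alpha> = succ_ix \<beta>" by blast
      have b\<xi>: "\<beta> < \<xi>" using b less.prems by simp
      define A where "A = E S (\<Gamma>1 \<inter> {..<\<beta>})"
      define C where "C = E S (\<Gamma>2 \<inter> {..<\<beta>})"
      define D where "D = E S ((\<Gamma>1 \<inter> \<Gamma>2) \<inter> {..<\<beta>})"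
      have Q0: "Qp A C D" unfolding A_def C_def D_def using less.IH b less.prems by simp
      have sA: "subalgebra A" and sC: "subalgebra C" and sD: "subalgebra D"
        unfolding A_def C_def D_def by (rule E_subalg)+
      have sB: "subalgebra (B \<beta>)" using T b\<xi> by (intro tsf_sub) auto
      have po: "subalgebra (R \<beta>)" "subalgebra (S \<beta>)" "push_out (R \<beta>) (B \<beta>) (S \<beta>) (B (succ_ix \<beta>))"
        using tsf_po[OF T b\<xi>] by auto
      have BSR: "B \<beta> \<inter> S \<beta> = R \<beta>" and com: "commute (B \<beta>) (S \<beta>)"
        using po(3) unfolding push_out_def by auto
      have AB: "A \<subseteq> B \<beta>" and CB: "C \<subseteq> B \<beta>"
        unfolding A_def C_def using E_sub_B[OF T, of \<beta>] b\<xi> by auto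
      have DA: "D \<subseteq> A" and DC: "D \<subseteq> C" unfolding A_def C_def D_def by (auto intro!: E_mono)
      have sat1: "\<beta> \<in> \<Gamma>1 \<Longrightarrow> R \<beta> \<subseteq> A" using assms(4) unfolding saturated_def A_def by blast
      have sat2: "\<beta> \<in> \<Gamma>2 \<Longrightarrow> R \<beta> \<subseteq> C" using assms(5) unfolding saturated_def C_def by blast
      have sat12: "\<beta> \<in> \<Gamma>1 \<inter> \<Gamma>2 \<Longrightarrow> R \<beta> \<subseteq> D" using assms(6) unfolding saturated_def D_def by blast
      have e1: "E S (\<Gamma>1 \<inter> {..<\<alpha>}) = (if \<beta> \<in> \<Gamma>1 then gen (A \<union> S \<beta>) else A)"
        unfolding a A_def by (rule E_succ[OF b\<xi>])
      have e2: "E S (\<Gamma>2 \<inter> {..<\<alpha>}) = (if \<beta> \<in> \<Gamma>2 then gen (C \<union> S \<beta>) else C)"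
        unfolding a C_def by (rule E_succ[OF b\<xi>])
      have e12: "E S ((\<Gamma>1 \<inter> \<Gamma>2) \<inter> {..<\<alpha>}) = (if \<beta> \<in> \<Gamma>1 \<inter> \<Gamma>2 then gen (D \<union> S \<beta>) else D)"
        unfolding a D_def by (rule E_succ[OF b\<xi>])
      show ?thesis
      proof (cases "\<beta> \<in> \<Gamma>1"; cases "\<beta> \<in> \<Gamma>2")
        assume "\<beta> \<in> \<Gamma>1" "\<beta> \<in> \<Gamma>2"
        then have "Qp (gen (A \<union> S \<beta>)) (gen (C \<union> S \<beta>)) (gen (D \<union> S \<beta>))"
          using sat12 BSR by (intro step_both[OF sA sC sD sB po(2) AB CB _ DA com Q0]) auto
        then show ?thesis using e1 e2 e12 \<open>\<beta> \<in> \<Gamma>1\<close> \<open>\<beta> \<in> \<Gamma>2\<close> by simp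
      next
        assume "\<beta> \<in> \<Gamma>1" "\<beta> \<notin> \<Gamma>2"
        then have "Qp (gen (A \<union> S \<beta>)) C D"
          using sat1 BSR by (intro step_one[OF sA sC sD sB po(2) AB CB _ com Q0]) auto
        then show ?thesis using e1 e2 e12 \<open>\<beta> \<in> \<Gamma>1\<close> \<open>\<beta> \<notin> \<Gamma>2\<close> by simp
      next
        assume "\<beta> \<notin> \<Gamma>1" "\<beta> \<in> \<Gamma>2"
        then have "Qp (gen (C \<union> S \<beta>)) A D"
          using sat2 BSR by (intro step_one[OF sC sA sD sB po(2) CB AB _ com Qp_sym[OF sD Q0]]) auto
        then have "Qp A (gen (C \<union> S \<beta>)) D" by (rule Qp_sym[OF sD])
        then show ?thesis using e1 e2 e12 \<open>\<beta> \<notin> \<Gamma>1\<close> \<open>\<beta> \<in> \<Gamma>2\<close> by simp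
      next
        assume "\<beta> \<notin> \<Gamma>1" "\<beta> \<notin> \<Gamma>2"
        then show ?thesis using e1 e2 e12 Q0 by simp
      qed
    next
      case 3
      show ?thesis unfolding Qp_def
      proof (intro ballI impI)
        fix x y assume x: "x \<in> E S (\<Gamma>1 \<inter> {..<\<alpha>})" and y: "y \<in> E S (\<Gamma>2 \<inter> {..<\<alpha>})"
          and xy: "inf x y = bot"
        obtain b1 where b1: "b1 < \<alpha>" "x \<in> E S (\<Gamma>1 \<inter> {..<b1})" using E_limit[OF 3 x] by blast
        obtain b2 where b2: "b2 < \<alpha>" "y \<in> E S (\<Gamma>2 \<inter> {..<b2})" using E_limit[OF 3 y] by blast
        define m where "m = max b1 b2"
        have m: "m < \<alpha>" "b1 \<le> m" "b2 \<le> m" unfolding m_def using b1 b2 by auto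
        have "\<Gamma>1 \<inter> {..<b1} \<subseteq> \<Gamma>1 \<inter> {..<m}" using m by auto
        then have "x \<in> E S (\<Gamma>1 \<inter> {..<m})" using b1(2) E_mono by blast
        moreover have "\<Gamma>2 \<inter> {..<b2} \<subseteq> \<Gamma>2 \<inter> {..<m}" using m by auto
        then have "y \<in> E S (\<Gamma>2 \<inter> {..<m})" using b2(2) E_mono by blast
        moreover have "Qp (E S (\<Gamma>1 \<inter> {..<m})) (E S (\<Gamma>2 \<inter> {..<m})) (E S ((\<Gamma>1 \<inter> \<Gamma>2) \<inter> {..<m}))"
          using less.IH m(1) less.prems by simp
        ultimately obtain d where d: "d \<in> E S ((\<Gamma>1 \<inter> \<Gamma>2) \<inter> {..<m})" "x \<le> d" "inf d y = bot"
          using xy unfolding Qp_def by blast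
        have "E S ((\<Gamma>1 \<inter> \<Gamma>2) \<inter> {..<m}) \<subseteq> E S ((\<Gamma>1 \<inter> \<Gamma>2) \<inter> {..<\<alpha>})" using m by (intro E_mono) auto
        then show "\<exists>d\<in>E S ((\<Gamma>1 \<inter> \<Gamma>2) \<inter> {..<\<alpha>}). x \<le> d \<and> inf d y = bot" using d by blast
      qed
    qed
  qed
  have i1: "\<Gamma>1 \<inter> {..<\<xi>} = \<Gamma>1" and i2: "\<Gamma>2 \<inter> {..<\<xi>} = \<Gamma>2" and i12: "(\<Gamma>1 \<inter> \<Gamma>2) \<inter> {..<\<xi>} = \<Gamma>1 \<inter> \<Gamma>2"
    using assms(2,3) by auto
  have Q: "Qp (E S \<Gamma>1) (E S \<Gamma>2) (E S (\<Gamma>1 \<inter> \<Gamma>2))" using main[of \<xi>] i1 i2 i12 by simp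
  have s12: "subalgebra (E S (\<Gamma>1 \<inter> \<Gamma>2))" and s1: "subalgebra (E S \<Gamma>1)" and s2: "subalgebra (E S \<Gamma>2)"
    by (rule E_subalg)+
  have D1: "E S (\<Gamma>1 \<inter> \<Gamma>2) \<subseteq> E S \<Gamma>1" and D2: "E S (\<Gamma>1 \<inter> \<Gamma>2) \<subseteq> E S \<Gamma>2"
    by (auto intro!: E_mono)
  have int: "E S \<Gamma>1 \<inter> E S \<Gamma>2 = E S (\<Gamma>1 \<inter> \<Gamma>2)"
  proof
    show "E S \<Gamma>1 \<inter> E S \<Gamma>2 \<subseteq> E S (\<Gamma>1 \<inter> \<Gamma>2)"
    proof
      fix x assume x: "x \<in> E S \<Gamma>1 \<inter> E S \<Gamma>2"
      then have "- x \<in> E S \<Gamma>2" using s2 by (simp add: sub_neg)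
      then obtain d where d: "d \<in> E S (\<Gamma>1 \<inter> \<Gamma>2)" "x \<le> d" "inf d (- x) = bot"
        using Q x unfolding Qp_def by (metis IntD1 inf_compl_bot)
      have "d \<le> x" using d(3) by (metis inf_shunt double_compl)
      then have "x = d" using d(2) by simp
      then show "x \<in> E S (\<Gamma>1 \<inter> \<Gamma>2)" using d(1) by simp
    qed
  qed (use D1 D2 in blast)
  have com: "commute (E S \<Gamma>1) (E S \<Gamma>2)"
    unfolding commute_def
  proof (intro ballI impI)
    fix a s assume a: "a \<in> E S \<Gamma>1" and s: "s \<in> E S \<Gamma>2" and as: "inf a s = bot"
    then obtain d where d: "d \<in> E S (\<Gamma>1 \<inter> \<Gamma>2)" "a \<le> d" "inf d s = bot"
      using Q unfolding Qp_def by blast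
    have nd: "- d \<in> E S (\<Gamma>1 \<inter> \<Gamma>2)" using d(1) s12 by (simp add: sub_neg)
    show "\<exists>b1\<in>E S \<Gamma>1 \<inter> E S \<Gamma>2. \<exists>b2\<in>E S \<Gamma>1 \<inter> E S \<Gamma>2. a \<le> b1 \<and> s \<le> b2 \<and> inf b1 b2 = bot"
    proof (intro bexI conjI)
      show "a \<le> d" by (fact d(2))
      show "s \<le> - d" using d(3) by (metis inf_shunt inf_commute)
      show "inf d (- d) = bot" by simp
      show "d \<in> E S \<Gamma>1 \<inter> E S \<Gamma>2" using d(1) int by blast
      show "- d \<in> E S \<Gamma>1 \<inter> E S \<Gamma>2" using nd int by blast
    qed
  qed
  have gen: "gen (E S \<Gamma>1 \<union> E S \<Gamma>2) = E S (\<Gamma>1 \<union> \<Gamma>2)"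
    unfolding E_def by (simp add: gen_Un_gen UN_Un)
  show ?thesis unfolding push_out_def
    using D1 D2 int com gen E_mono[of \<Gamma>1 "\<Gamma>1 \<union> \<Gamma>2" S] E_mono[of \<Gamma>2 "\<Gamma>1 \<union> \<Gamma>2" S] by auto
qed


end
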